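(* Let $a=\{a_k\}_{k=0}^\infty$ be a real sequence with $1=a_0>a_1\geq a_2\geq\cdots\geq a_{k-1}\geq a_k\geq\cdots$, $\lim_{k\to\infty}a_k=0$, and $\sum_{k=0}^\infty a_k=\infty$. Define $\{b_k\}_{k=0}^\infty$ by $b_0=1/a_0$ and $b_k=-\frac{1}{a_0}\sum_{j=0}^{k-1}a_{k-j}b_j$ for $k\geq1$, and let $u_k=\sum_{j=0}^k b_j$ for $k\geq 0$. Then $\lim_{k\to\infty}u_k=0$.
   Context: The sequence $\{b_k\}$ gives the entries of the inverse $B=A^{-1}$ of the half-infinite lower triangular Toeplitz matrix $A$ with entries $A_{ij}=a_{i-j}$ for $i\geq j$ (and $0$ otherwise); $B$ is again lower triangular Toeplitz with $B_{ij}=b_{i-j}$. The sequence $\{u_k\}$ of partial sums is called the fundamental matrix of $a$. *)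

theory Defs
  imports "HOL-Analysis.Analysis"
begin

function inv_toeplitz :: "(nat \<Rightarrow> real) \<Rightarrow> nat \<Rightarrow> real" where
  "inv_toeplitz a k =
     (if k = 0 then 1 / a 0
      else - (1 / a 0) * (\<Sum>j<k. a (k - j) * inv_toeplitz a j))"
  by auto
termination
  by (relation "Wellfounded.measure snd") auto

declare inv_toeplitz.simps [simp del]

definition fundamental_seq :: "(nat \<Rightarrow> real) \<Rightarrow> nat \<Rightarrow> real" where
  "fundamental_seq a k = (\<Sum>j\<le>k. inv_toeplitz a j)"

end

theory Submission
  imports Defs "HOL-Computational_Algebra.Formal_Power_Series"
begin

locale renew =
  fixes a :: "nat \<Rightarrow> real"
  assumes a0: "a 0 = 1" and a01: "a 0 > a 1"
    and amono: "\<And>k. k \<ge> 1 \<Longrightarrow> a (Suc k) \<le> a k"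
    and alim: "a \<longlonglongrightarrow> 0" and ns: "\<not> summable a"
begin

definition "b = inv_toeplitz a"
definition "u = fundamental_seq a"
definition "f i = (if i = 0 then 0 else a (i-1) - a i)"

lemma b_conv: "(\<Sum>i=0..n. a i * b (n-i)) = (if n = 0 then 1 else 0)"
proof -
  have r: "(\<Sum>i=0..n. a i * b (n-i)) = (\<Sum>j=0..n. a (n-j) * b j)"
    by (subst sum.atLeastAtMost_rev) simp
  show ?thesis
  proof (cases "n = 0")
    case True then show ?thesis using a0 by (simp add: b_def inv_toeplitz.simps)
  next
    case False
    have "(\<Sum>j=0..n. a (n-j) * b j) = (\<Sum>j<n. a (n-j) * b j) + a 0 * b n"
      by (simp add: atLeast0AtMost lessThan_Suc_atMost[symmetric])
    also have "b n = - (\<Sum>j<n. a (n-j) * b j)"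
      using False a0 by (simp add: b_def inv_toeplitz.simps[of a n])
    finally show ?thesis using r False a0 by simp
  qed
qed

lemma AB: "Abs_fps a * Abs_fps b = 1"
  by (rule fps_ext) (simp add: fps_mult_nth b_conv)

lemma BO: "Abs_fps b * Abs_fps (\<lambda>_. 1) = Abs_fps u"
  by (rule fps_ext) (simp add: fps_mult_nth u_def b_def fundamental_seq_def atLeast0AtMost)

lemma Au: "(\<Sum>i=0..n. a i * u (n-i)) = 1"
proof -
  have "Abs_fps a * Abs_fps u = Abs_fps (\<lambda>_. 1::real)"
    by (simp add: BO[symmetric] mult.assoc[symmetric] AB)
  then have "fps_nth (Abs_fps a * Abs_fps u) n = 1" by simp
  then show ?thesis by (simp add: fps_mult_nth)
qed

lemma F_eq: "Abs_fps f = 1 - (1 - fps_X) * Abs_fps a"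
  by (rule fps_ext) (simp add: f_def algebra_simps a0)

lemma renewal: "u n = (if n = 0 then 1 else 0) + (\<Sum>i=0..n. f i * u (n-i))"
proof -
  let ?O = "Abs_fps (\<lambda>_. 1::real)"
  have XO: "(1 - fps_X) * ?O = 1"
    using inverse_mult_eq_1[of ?O] fps_inverse_gp'[where 'a=real] by simp
  have "Abs_fps u * (1 - Abs_fps f) = 1"
  proof -
    have "Abs_fps u * (1 - Abs_fps f) = ((1 - fps_X) * ?O) * (Abs_fps a * Abs_fps b)"
      by (simp add: F_eq BO[symmetric] algebra_simps)
    then show ?thesis by (simp add: XO AB)
  qed
  then have "Abs_fps u = 1 + Abs_fps f * Abs_fps u" by (simp add: algebra_simps)
  then have "fps_nth (Abs_fps u) n = fps_nth (1 + Abs_fps f * Abs_fps u) n" by simp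
  then show ?thesis by (simp add: fps_mult_nth)
qed

lemma a_anti: assumes "1 \<le> n" "n \<le> m" shows "a m \<le> a n"
  using assms(2)
proof (induction m rule: dec_induct)
  case base then show ?case by simp
next
  case (step m) then show ?case using amono[of m] assms(1) by simp
qed

lemma a_nonneg: "a n \<ge> 0"
proof (cases "n = 0")
  case True then show ?thesis using a0 by simp
next
  case False
  have "\<forall>m\<ge>n. a m \<le> a n" using a_anti False by simp
  then show ?thesis using LIMSEQ_le_const2[OF alim, of "a n"] by blast
qed

lemma f_nonneg: "f i \<ge> 0"
proof -
  consider "i = 0" | "i = 1" | "i \<ge> 2" by linarith
  then show ?thesis
  proof cases
    case 3
    then have "a (Suc (i-1)) \<le> a (i-1)" using amono[of "i-1"] by simp
    then show ?thesis using 3 by (simp add: f_def)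
  qed (use a01 in \<open>auto simp: f_def\<close>)
qed

lemma f1: "f 1 > 0" "f 1 \<le> 1"
  using a01 a0 a_nonneg[of 1] by (auto simp: f_def)

lemma f_sum: "(\<Sum>i=0..n. f i) = 1 - a n"
  by (induction n) (auto simp: f_def a0)

lemma f_tail_eq: "(\<Sum>i=0..n. if K < i then f i else 0) = (if K < n then a K - a n else 0)"
  by (induction n) (auto simp: f_def less_Suc_eq)

lemma f_tail: "(\<Sum>i=0..n. if K < i then f i else 0) \<le> a K"
  using f_tail_eq[of K n] a_nonneg[of n] a_nonneg[of K] by simp

lemma u0: "u 0 = 1"
  using renewal[of 0] by (simp add: f_def)

lemma u_bounds: "0 \<le> u n \<and> u n \<le> 1"
proof (induction n rule: less_induct)
  case (less n)
  show ?case
  proof (cases "n = 0")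
    case True then show ?thesis using u0 by simp
  next
    case False
    then have un: "u n = (\<Sum>i=0..n. f i * u (n-i))" using renewal[of n] by simp
    have t: "0 \<le> f i * u (n-i) \<and> f i * u (n-i) \<le> f i" if "i \<in> {0..n}" for i
    proof (cases "i = 0")
      case True then show ?thesis by (simp add: f_def)
    next
      case False
      then have "0 \<le> u (n-i) \<and> u (n-i) \<le> 1" using less[of "n-i"] \<open>n \<noteq> 0\<close> by simp
      then show ?thesis using f_nonneg[of i] by (simp add: mult_left_le)
    qed
    have "0 \<le> u n" unfolding un by (rule sum_nonneg) (use t in blast)
    moreover have "u n \<le> (\<Sum>i=0..n. f i)" unfolding un by (rule sum_mono) (use t in blast)
    ultimately show ?thesis using f_sum[of n] a_nonneg[of n] by simp
  qed
qed

lemma upper_step: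
  assumes K: "K \<ge> 1" and N: "\<forall>j\<ge>N. u j < c" and c: "c \<ge> 0" and n: "n \<ge> K + N"
  shows "u n \<le> c + a K + f 1 * (u (n-1) - c)"
proof -
  have n0: "n \<noteq> 0" using n K by simp
  then have un: "u n = (\<Sum>i=0..n. f i * u (n-i))" using renewal[of n] by simp
  define h where "h i = f i * c + (if K < i then f i else 0) + (if i = 1 then f 1 * (u (n-1) - c) else 0)" for i
  have "f i * u (n-i) \<le> h i" if "i \<in> {0..n}" for i
  proof -
    consider "i = 0" | "i = 1" | "2 \<le> i" "i \<le> K" | "K < i" by linarith
    then show ?thesis
    proof cases
      case 1 then show ?thesis by (simp add: h_def f_def)
    next
      case 2 then show ?thesis using K by (simp add: h_def algebra_simps)
    next
      case 3
      then have "u (n-i) < c" using N n by simp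
      then have "f i * u (n-i) \<le> f i * c" using f_nonneg[of i] by (simp add: mult_left_mono)
      then show ?thesis using 3 by (simp add: h_def)
    next
      case 4
      have "f i * u (n-i) \<le> f i" using f_nonneg[of i] u_bounds[of "n-i"] by (simp add: mult_left_le)
      moreover have "0 \<le> f i * c" using f_nonneg[of i] c by simp
      ultimately show ?thesis using 4 K by (simp add: h_def)
    qed
  qed
  then have "u n \<le> (\<Sum>i=0..n. h i)" unfolding un by (rule sum_mono)
  also have "(\<Sum>i=0..n. h i) = c * (\<Sum>i=0..n. f i) + (\<Sum>i=0..n. if K < i then f i else 0)
     + f 1 * (u (n-1) - c)"
    using n0 by (simp add: h_def sum.distrib sum_distrib_left[symmetric] mult.commute)
  also have "\<dots> \<le> c + a K + f 1 * (u (n-1) - c)"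
  proof -
    have "c * (\<Sum>i=0..n. f i) \<le> c" using f_sum[of n] a_nonneg[of n] c
      by (simp add: mult_left_le)
    then show ?thesis using f_tail[of K n] by simp
  qed
  finally show ?thesis .
qed

lemma step:
  assumes l0: "ll \<ge> 0" and lsup: "\<And>\<delta>. \<delta> > 0 \<Longrightarrow> \<exists>N. \<forall>j\<ge>N. u j < ll + \<delta>"
    and m: "\<And>z. \<exists>V. \<forall>v\<ge>V. z \<le> m v" and conv: "(\<lambda>v. u (m v)) \<longlonglongrightarrow> ll"
  shows "(\<lambda>v. u (m v - 1)) \<longlonglongrightarrow> ll"
proof (rule LIMSEQ_I)
  fix \<epsilon> :: real assume e: "\<epsilon> > 0"
  define \<eta> where "\<eta> = f 1 * \<epsilon> / 4"
  have eta: "\<eta> > 0" "\<eta> \<le> \<epsilon> / 4" using f1 e by (auto simp: \<eta>_def)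
  obtain K0 where K0: "\<forall>n\<ge>K0. norm (a n - 0) < \<eta>" using LIMSEQ_D[OF alim eta(1)] by blast
  define K where "K = max K0 1"
  have aK: "a K < \<eta>" using K0[rule_format, of K] by (simp add: K_def)
  obtain N where N: "\<forall>j\<ge>N. u j < ll + \<eta>" using lsup[OF eta(1)] by blast
  obtain V1 where V1: "\<forall>v\<ge>V1. norm (u (m v) - ll) < \<eta>" using LIMSEQ_D[OF conv eta(1)] by blast
  obtain V2 where V2: "\<forall>v\<ge>V2. K + N + 1 \<le> m v" using m by blast
  show "\<exists>V. \<forall>v\<ge>V. norm (u (m v - 1) - ll) < \<epsilon>"
  proof (intro exI allI impI)
    fix v assume v: "max V1 V2 \<le> v"
    define n where "n = m v"
    have n: "n \<ge> K + N + 1" using V2 v by (simp add: n_def)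
    have un: "u n > ll - \<eta>" using V1 v by (auto simp: n_def)
    have up: "u n \<le> (ll + \<eta>) + a K + f 1 * (u (n-1) - (ll + \<eta>))"
      by (rule upper_step) (use N n l0 eta in \<open>auto simp: K_def\<close>)
    have "f 1 * (u (n-1) - (ll + \<eta>)) > - 3 * \<eta>" using up un aK by linarith
    then have "f 1 * (u (n-1) - ll - \<eta> + 3 * \<epsilon> / 4) > 0"
      by (simp add: \<eta>_def algebra_simps)
    then have "u (n-1) - ll - \<eta> + 3 * \<epsilon> / 4 > 0" using f1 zero_less_mult_pos by blast
    then have lo: "u (n-1) > ll - \<epsilon>" using eta by linarith
    have "n - 1 \<ge> N" using n by simp
    then have "u (n-1) < ll + \<eta>" using N by blast
    then have hi: "u (n-1) < ll + \<epsilon>" using eta by linarith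
    show "norm (u (m v - 1) - ll) < \<epsilon>" using lo hi by (simp add: n_def abs_less_iff)
  qed
qed

lemma u_lim: "u \<longlonglongrightarrow> 0"
proof -
  define L where "L = limsup (\<lambda>n. ereal (u n))"
  obtain r :: "nat \<Rightarrow> nat" where r: "strict_mono r" and rl: "((\<lambda>n. ereal (u n)) o r) \<longlonglongrightarrow> L"
    using limsup_subseq_lim unfolding L_def by blast
  have L1: "L \<le> 1" unfolding L_def by (rule Limsup_bounded) (use u_bounds in auto)
  have L0: "0 \<le> L"
    by (rule LIMSEQ_le_const[OF rl]) (use u_bounds in auto)
  define ll where "ll = real_of_ereal L"
  have Le: "L = ereal ll" using L0 L1 unfolding ll_def by (cases L) auto
  have l0: "ll \<ge> 0" using L0 Le by simp
  have rconv: "(\<lambda>v. u (r v)) \<longlonglongrightarrow> ll" using rl Le by (simp add: o_def)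
  have lsup: "\<exists>N. \<forall>j\<ge>N. u j < ll + \<delta>" if "\<delta> > 0" for \<delta>
  proof -
    have "ereal (ll + \<delta>) > L" using Le that by simp
    then have "eventually (\<lambda>j. ereal (u j) < ereal (ll + \<delta>)) sequentially"
      using Limsup_lessD unfolding L_def by blast
    then show ?thesis by (simp add: eventually_sequentially)
  qed
  have ind: "(\<forall>z. \<exists>V. \<forall>v\<ge>V. z \<le> r v - k) \<and> (\<lambda>v. u (r v - k)) \<longlonglongrightarrow> ll" for k
  proof (induction k)
    case 0
    have "\<forall>v\<ge>z. z \<le> r v" for z using seq_suble[OF r] le_trans by blast
    then show ?case using rconv by auto
  next
    case (Suc k)
    have m: "\<exists>V. \<forall>v\<ge>V. z \<le> r v - k - 1" for z
    proof -
      obtain V where "\<forall>v\<ge>V. z + 1 \<le> r v - k" using Suc.IH by blast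
      then show ?thesis by (intro exI[of _ V]) auto
    qed
    have "(\<lambda>v. u (r v - k - 1)) \<longlonglongrightarrow> ll"
      by (rule step[OF l0 lsup]) (use Suc.IH in auto)
    moreover have e: "\<And>v. r v - Suc k = r v - k - 1" by simp
    ultimately show ?case using m by (simp only: e) blast
  qed
  have bound: "ll * (\<Sum>k=0..K. a k) \<le> 1" for K
  proof -
    have lim: "(\<lambda>v. \<Sum>k=0..K. a k * u (r v - k)) \<longlonglongrightarrow> (\<Sum>k=0..K. a k * ll)"
      by (intro tendsto_sum tendsto_mult_left) (use ind in blast)
    have "\<forall>v\<ge>K. (\<Sum>k=0..K. a k * u (r v - k)) \<le> 1"
    proof (intro allI impI)
      fix v assume v: "K \<le> v"
      then have "K \<le> r v" using seq_suble[OF r, of v] by simp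
      have "(\<Sum>k=0..K. a k * u (r v - k)) \<le> (\<Sum>k=0..r v. a k * u (r v - k))"
        by (rule sum_mono2) (use \<open>K \<le> r v\<close> a_nonneg u_bounds in auto)
      then show "(\<Sum>k=0..K. a k * u (r v - k)) \<le> 1" using Au by simp
    qed
    then have "(\<Sum>k=0..K. a k * ll) \<le> 1" using LIMSEQ_le_const2[OF lim] by blast
    then show ?thesis by (simp add: sum_distrib_left mult.commute)
  qed
  have "ll = 0"
  proof (rule ccontr)
    assume "ll \<noteq> 0"
    then have lp: "ll > 0" using l0 by simp
    have "(\<Sum>k\<le>K. a k) \<le> 1 / ll" for K
      using bound[of K] lp by (simp add: atLeast0AtMost field_simps mult.commute)
    then have "summable a" using bounded_imp_summable a_nonneg by blast
    then show False using ns by simp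
  qed
  show ?thesis
  proof (rule LIMSEQ_I)
    fix \<epsilon> :: real assume "\<epsilon> > 0"
    then obtain N where "\<forall>j\<ge>N. u j < \<epsilon>" using lsup \<open>ll = 0\<close> by fastforce
    then show "\<exists>N. \<forall>n\<ge>N. norm (u n - 0) < \<epsilon>" using u_bounds by fastforce
  qed
qed

end

theorem theorem1:
  fixes a :: "nat \<Rightarrow> real"
  assumes "a 0 = 1"
    and "a 0 > a 1"
    and "\<And>k. k \<ge> 1 \<Longrightarrow> a (Suc k) \<le> a k"
    and "a \<longlonglongrightarrow> 0"
    and "\<not> summable a"
  shows "fundamental_seq a \<longlonglongrightarrow> 0"
proof -
  interpret renew a using assms by unfold_locales auto
  show ?thesis using u_lim by (simp add: u_def)
qed

end
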